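(* Let $V=\{1,\dots,n\}$, let $H_1=(V,E_1)$ with $E_1=\{e\subseteq V : |e|\ge 2\}$, and let $H_2=(V,E_2)$ with $E_2=\{e\subseteq V : 2\le|e|\le 3\}$. If the toric ideal $I_{H_2}$ is generated in degree at most $d$, then the toric ideal $I_{H_1}$ is generated in degree at most $d$.
   Context: For a hypergraph $H=(V,E)$ (edges are nonempty subsets of $V=\{1,\dots,n\}$, no repeated edges) and a field $K$, the toric ideal $I_H$ is the kernel of the $K$-algebra homomorphism $K[t_e : e\in E]\to K[x_1,\dots,x_n]$, $t_e\mapsto\prod_{j\in e}x_j$. An ideal is generated in degree at most $d$ if it has a generating set consisting of polynomials of degree at most $d$. *)

theory Defs
  imports "HOL-Library.Poly_Mapping"
begin

(* Multivariate polynomials over a coefficient ring 'k in variables of type 'v: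
  finitely supported maps from monomials (exponent vectors 'v =>0 nat) to coefficients. *)
type_synonym ('v, 'k) mpoly = "('v \<Rightarrow>\<^sub>0 nat) \<Rightarrow>\<^sub>0 'k"

definition Var :: "'v \<Rightarrow> ('v, 'k::comm_ring_1) mpoly" where
  "Var v = Poly_Mapping.single (Poly_Mapping.single v 1) 1"

definition Const :: "'k::comm_ring_1 \<Rightarrow> ('v, 'k) mpoly" where
  "Const c = Poly_Mapping.single 0 c"

(* The polynomial ring K[t_e : e in E], as a subring of all polynomials in variables 'v. *)
definition poly_ring :: "'v set \<Rightarrow> ('v, 'k::comm_ring_1) mpoly set" where
  "poly_ring E = {p. \<forall>m \<in> Poly_Mapping.keys p. Poly_Mapping.keys m \<subseteq> E}"

(* Total degree (the zero polynomial gets degree 0). *)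
definition total_deg :: "('v, 'k::comm_ring_1) mpoly \<Rightarrow> nat" where
  "total_deg p = Max (insert 0 ((\<lambda>m. sum (Poly_Mapping.lookup m) (Poly_Mapping.keys m)) ` Poly_Mapping.keys p))"

definition ideal_in :: "('v, 'k::comm_ring_1) mpoly set \<Rightarrow> ('v, 'k) mpoly set \<Rightarrow> ('v, 'k) mpoly set" where
  "ideal_in R G = \<Inter>{I. G \<subseteq> I \<and> I \<subseteq> R \<and> 0 \<in> I \<and> (\<forall>a\<in>I. \<forall>b\<in>I. a + b \<in> I)
                        \<and> (\<forall>r\<in>R. \<forall>a\<in>I. r * a \<in> I)}"

definition generated_in_degree_le :: "('v, 'k::comm_ring_1) mpoly set \<Rightarrow> ('v, 'k) mpoly set \<Rightarrow> nat \<Rightarrow> bool" where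
  "generated_in_degree_le R I d \<longleftrightarrow> (\<exists>G \<subseteq> I. (\<forall>g\<in>G. total_deg g \<le> d) \<and> ideal_in R G = I)"

definition toric_hom :: "(nat set, 'k::comm_ring_1) mpoly \<Rightarrow> (nat, 'k) mpoly" where
  "toric_hom p = (\<Sum>m \<in> Poly_Mapping.keys p. Const (Poly_Mapping.lookup p m) *
       (\<Prod>e \<in> Poly_Mapping.keys m. (\<Prod>j\<in>e. Var j) ^ Poly_Mapping.lookup m e))"

definition toric_ideal :: "nat set set \<Rightarrow> (nat set, 'k::comm_ring_1) mpoly set" where
  "toric_ideal E = {p \<in> poly_ring E. toric_hom p = 0}"

definition E_all :: "nat \<Rightarrow> nat set set" where
  "E_all n = {e. e \<subseteq> {1..n} \<and> 2 \<le> card e}"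

definition E_23 :: "nat \<Rightarrow> nat set set" where
  "E_23 n = {e. e \<subseteq> {1..n} \<and> 2 \<le> card e \<and> card e \<le> 3}"

end

theory Submission
  imports Defs
begin


definition XE :: "nat set \<Rightarrow> (nat, 'k::comm_ring_1) mpoly" where
  "XE e = (\<Prod>j\<in>e. Var j)"

definition TM :: "(nat set \<Rightarrow>\<^sub>0 nat) \<Rightarrow> (nat, 'k::comm_ring_1) mpoly" where
  "TM m = (\<Prod>e \<in> Poly_Mapping.keys m. XE e ^ Poly_Mapping.lookup m e)"

lemma toric_hom_TM: "toric_hom p = (\<Sum>m \<in> Poly_Mapping.keys p. Const (Poly_Mapping.lookup p m) * TM m)"
  unfolding toric_hom_def TM_def XE_def by simp

lemma TM_super:
  assumes "finite S" "Poly_Mapping.keys m \<subseteq> S"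
  shows "TM m = (\<Prod>e \<in> S. XE e ^ Poly_Mapping.lookup m e)"
  unfolding TM_def
  by (rule prod.mono_neutral_left) (use assms in \<open>auto simp: in_keys_iff\<close>)

lemma TM_add: "TM (a + b) = TM a * TM b"
proof -
  let ?S = "Poly_Mapping.keys a \<union> Poly_Mapping.keys b"
  have "TM (a+b) = (\<Prod>e \<in> ?S. XE e ^ Poly_Mapping.lookup (a+b) e)"
    using keys_add[of a b] by (intro TM_super) auto
  also have "\<dots> = (\<Prod>e \<in> ?S. XE e ^ Poly_Mapping.lookup a e) * (\<Prod>e \<in> ?S. XE e ^ Poly_Mapping.lookup b e)"
    by (simp add: lookup_add power_add prod.distrib)
  also have "\<dots> = TM a * TM b"
    by (subst (1 2) TM_super[of ?S]) auto
  finally show ?thesis .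
qed

lemma TM_single: "TM (Poly_Mapping.single e k) = XE e ^ k"
  unfolding TM_def by simp

lemma TM_zero: "TM 0 = 1"
  unfolding TM_def by simp

lemma Const_zero[simp]: "Const 0 = 0" unfolding Const_def by simp
lemma Const_add: "Const (a + b) = Const a + Const b" unfolding Const_def by (simp add: single_add)
lemma Const_mult: "Const (a * b) = Const a * Const b" unfolding Const_def by (simp add: mult_single)
lemma Const_single: "Const c * Poly_Mapping.single m 1 = Poly_Mapping.single m c"
  unfolding Const_def by (simp add: mult_single)

lemma toric_super:
  assumes "finite S" "Poly_Mapping.keys p \<subseteq> S"
  shows "toric_hom p = (\<Sum>m \<in> S. Const (Poly_Mapping.lookup p m) * TM m)"
  unfolding toric_hom_TM
  by (rule sum.mono_neutral_left) (use assms in \<open>auto simp: in_keys_iff\<close>)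

lemma toric_add: "toric_hom (p + q) = toric_hom p + toric_hom q"
proof -
  let ?S = "Poly_Mapping.keys p \<union> Poly_Mapping.keys q"
  have "toric_hom (p+q) = (\<Sum>m \<in> ?S. Const (Poly_Mapping.lookup (p+q) m) * TM m)"
    using keys_add[of p q] by (intro toric_super) auto
  also have "\<dots> = (\<Sum>m \<in> ?S. Const (Poly_Mapping.lookup p m) * TM m) + (\<Sum>m \<in> ?S. Const (Poly_Mapping.lookup q m) * TM m)"
    by (simp add: lookup_add Const_add distrib_right sum.distrib)
  also have "\<dots> = toric_hom p + toric_hom q"
    by (subst (1 2) toric_super[of ?S]) auto
  finally show ?thesis .
qed

lemma toric_zero: "toric_hom 0 = 0"
  unfolding toric_hom_def by simp

lemma toric_uminus: "toric_hom (- p) = - toric_hom p"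
proof -
  have "toric_hom p + toric_hom (-p) = 0" using toric_add[of p "-p"] by (simp add: toric_zero)
  thus ?thesis by (simp add: add_eq_0_iff)
qed

lemma toric_diff: "toric_hom (p - q) = toric_hom p - toric_hom q"
  using toric_add[of p "-q"] toric_uminus[of q] by simp

lemma toric_sum: "toric_hom (sum f A) = (\<Sum>a\<in>A. toric_hom (f a))"
  by (induction A rule: infinite_finite_induct) (auto simp: toric_zero toric_add)

lemma toric_single: "toric_hom (Poly_Mapping.single m c) = Const c * TM m"
  by (cases "c = 0") (auto simp: toric_hom_TM)

lemma expand: "p = (\<Sum>m \<in> Poly_Mapping.keys p. Poly_Mapping.single m (Poly_Mapping.lookup p m))"
proof (rule poly_mapping_eqI)
  fix k
  show "Poly_Mapping.lookup p k = Poly_Mapping.lookup (\<Sum>m \<in> Poly_Mapping.keys p. Poly_Mapping.single m (Poly_Mapping.lookup p m)) k"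
    by (simp add: lookup_sum lookup_single when_def in_keys_iff)
qed

lemma toric_mult: "toric_hom (p * q) = toric_hom p * toric_hom q"
proof -
  let ?P = "Poly_Mapping.keys p" and ?Q = "Poly_Mapping.keys q"
  have "p * q = (\<Sum>a\<in>?P. Poly_Mapping.single a (Poly_Mapping.lookup p a)) * (\<Sum>b\<in>?Q. Poly_Mapping.single b (Poly_Mapping.lookup q b))"
    by (subst (1) expand, subst (2) expand) (rule refl)
  also have "\<dots> = (\<Sum>a\<in>?P. \<Sum>b\<in>?Q. Poly_Mapping.single (a+b) (Poly_Mapping.lookup p a * Poly_Mapping.lookup q b))"
    by (simp add: sum_product mult_single)
  finally have "toric_hom (p*q) = (\<Sum>a\<in>?P. \<Sum>b\<in>?Q. Const (Poly_Mapping.lookup p a) * TM a * (Const (Poly_Mapping.lookup q b) * TM b))"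
    by (simp add: toric_sum toric_single Const_mult TM_add mult_ac)
  also have "\<dots> = toric_hom p * toric_hom q"
    by (simp add: toric_hom_TM sum_product)
  finally show ?thesis .
qed




lemma PR_add: "p \<in> poly_ring E \<Longrightarrow> q \<in> poly_ring E \<Longrightarrow> p + q \<in> poly_ring E"
  unfolding poly_ring_def using keys_add[of p q] by blast

lemma PR_mult: assumes "p \<in> poly_ring E" "q \<in> poly_ring E" shows "p * q \<in> poly_ring E"
  unfolding poly_ring_def mem_Collect_eq
proof (intro ballI)
  fix m assume "m \<in> Poly_Mapping.keys (p*q)"
  then obtain a b where "m = a + b" "a \<in> Poly_Mapping.keys p" "b \<in> Poly_Mapping.keys q"
    using keys_mult[of p q] by blast
  thus "Poly_Mapping.keys m \<subseteq> E" using assms keys_add[of a b] unfolding poly_ring_def by blast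
qed

lemma PR_zero: "0 \<in> poly_ring E" unfolding poly_ring_def by simp

lemma PR_single: "Poly_Mapping.keys m \<subseteq> E \<Longrightarrow> Poly_Mapping.single m c \<in> poly_ring E"
  unfolding poly_ring_def by simp

lemma PR_Const: "Const c \<in> poly_ring E"
  unfolding Const_def by (rule PR_single) simp

lemma PR_mono: "E \<subseteq> F \<Longrightarrow> poly_ring E \<subseteq> poly_ring F"
  unfolding poly_ring_def by blast

lemma PR_sum: "(\<And>a. a \<in> A \<Longrightarrow> f a \<in> poly_ring E) \<Longrightarrow> sum f A \<in> poly_ring E"
  by (induction A rule: infinite_finite_induct) (auto simp: PR_zero PR_add)

lemma minus_one_Const: "(-1 :: ('v,'k::comm_ring_1) mpoly) = Const (-1)"
  unfolding Const_def by (simp add: single_uminus)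

lemma ID_gen: "G \<subseteq> ideal_in R G" unfolding ideal_in_def by blast
lemma ID_zero: "0 \<in> ideal_in R G" unfolding ideal_in_def by blast
lemma ID_add: "a \<in> ideal_in R G \<Longrightarrow> b \<in> ideal_in R G \<Longrightarrow> a + b \<in> ideal_in R G"
  unfolding ideal_in_def by blast
lemma ID_mult: "r \<in> R \<Longrightarrow> a \<in> ideal_in R G \<Longrightarrow> r * a \<in> ideal_in R G"
  unfolding ideal_in_def by blast
lemma ID_least: "G \<subseteq> I \<Longrightarrow> I \<subseteq> R \<Longrightarrow> 0 \<in> I \<Longrightarrow> (\<forall>a\<in>I. \<forall>b\<in>I. a + b \<in> I)
   \<Longrightarrow> (\<forall>r\<in>R. \<forall>a\<in>I. r * a \<in> I) \<Longrightarrow> ideal_in R G \<subseteq> I"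
  unfolding ideal_in_def by blast

lemma ID_diff:
  assumes "a \<in> ideal_in (poly_ring E) G" "b \<in> ideal_in (poly_ring E) G"
  shows "a - b \<in> ideal_in (poly_ring E) G"
proof -
  have "Const (-1) * b \<in> ideal_in (poly_ring E) G" by (rule ID_mult[OF PR_Const assms(2)])
  hence "-b \<in> ideal_in (poly_ring E) G" by (simp flip: minus_one_Const)
  from ID_add[OF assms(1) this] show ?thesis by simp
qed

lemma ID_sum: "(\<And>a. a \<in> A \<Longrightarrow> f a \<in> ideal_in R G) \<Longrightarrow> sum f A \<in> ideal_in R G"
  by (induction A rule: infinite_finite_induct) (auto simp: ID_zero ID_add)



lemma ID_sub:
  assumes "R3 \<subseteq> R" and "G \<subseteq> R3" and "G \<subseteq> H" and "\<And>a b. a \<in> R3 \<Longrightarrow> b \<in> R3 \<Longrightarrow> a + b \<in> R3"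
    and "\<And>a b. a \<in> R3 \<Longrightarrow> b \<in> R3 \<Longrightarrow> a * b \<in> R3" and "0 \<in> R3"
  shows "ideal_in R3 G \<subseteq> ideal_in R H"
  unfolding ideal_in_def
proof (rule Inter_greatest)
  fix I assume "I \<in> {I. H \<subseteq> I \<and> I \<subseteq> R \<and> 0 \<in> I \<and> (\<forall>a\<in>I. \<forall>b\<in>I. a + b \<in> I) \<and> (\<forall>r\<in>R. \<forall>a\<in>I. r * a \<in> I)}"
  hence I: "H \<subseteq> I" "I \<subseteq> R" "0 \<in> I" "\<forall>a\<in>I. \<forall>b\<in>I. a + b \<in> I" "\<forall>r\<in>R. \<forall>a\<in>I. r * a \<in> I" by auto
  have "I \<inter> R3 \<in> {I. G \<subseteq> I \<and> I \<subseteq> R3 \<and> 0 \<in> I \<and> (\<forall>a\<in>I. \<forall>b\<in>I. a + b \<in> I) \<and> (\<forall>r\<in>R3. \<forall>a\<in>I. r * a \<in> I)}"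
    using I assms by blast
  thus "\<Inter>{I. G \<subseteq> I \<and> I \<subseteq> R3 \<and> 0 \<in> I \<and> (\<forall>a\<in>I. \<forall>b\<in>I. a + b \<in> I) \<and> (\<forall>r\<in>R3. \<forall>a\<in>I. r * a \<in> I)} \<subseteq> I"
    by blast
qed

definition mdeg :: "('a \<Rightarrow>\<^sub>0 nat) \<Rightarrow> nat" where
  "mdeg m = sum (Poly_Mapping.lookup m) (Poly_Mapping.keys m)"

lemma mdeg_add: "mdeg (a + b) = mdeg a + mdeg b"
  unfolding mdeg_def by (rule setsum_keys_plus_distrib[where f="\<lambda>k v. v"]) auto

lemma mdeg_single: "mdeg (Poly_Mapping.single e k) = k"
  unfolding mdeg_def by simp

lemma total_deg_le: "(\<And>m. m \<in> Poly_Mapping.keys p \<Longrightarrow> mdeg m \<le> d) \<Longrightarrow> total_deg p \<le> d"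
  unfolding total_deg_def mdeg_def by (subst Max_le_iff) auto

lemma total_deg_ge: "total_deg p \<le> d \<Longrightarrow> m \<in> Poly_Mapping.keys p \<Longrightarrow> mdeg m \<le> d"
  unfolding total_deg_def mdeg_def by (subst (asm) Max_le_iff) auto

definition mu :: "(nat set \<Rightarrow>\<^sub>0 nat) \<Rightarrow> nat" where
  "mu m = (\<Sum>e\<in>Poly_Mapping.keys m. Poly_Mapping.lookup m e * card e ^ 2)"

lemma mu_add: "mu (a + b) = mu a + mu b"
  unfolding mu_def by (rule setsum_keys_plus_distrib[where f="\<lambda>k v. v * card k ^ 2"]) (auto simp: algebra_simps)

lemma mu_single: "mu (Poly_Mapping.single e k) = k * card e ^ 2"
  unfolding mu_def by simp




lemma PR_diff: "p \<in> poly_ring E \<Longrightarrow> q \<in> poly_ring E \<Longrightarrow> p - q \<in> poly_ring E"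
proof -
  assume p: "p \<in> poly_ring E" and q: "q \<in> poly_ring E"
  have "Const (-1) * q \<in> poly_ring E" by (rule PR_mult[OF PR_Const q])
  hence "-q \<in> poly_ring E" by (simp flip: minus_one_Const)
  from PR_add[OF p this] show ?thesis by simp
qed

lemma XE_union: "a \<inter> b = {} \<Longrightarrow> finite a \<Longrightarrow> finite b \<Longrightarrow> XE (a \<union> b) = XE a * XE b"
  unfolding XE_def by (rule prod.union_disjoint) auto

definition Qset :: "nat \<Rightarrow> (nat set, 'k::comm_ring_1) mpoly set" where
  "Qset n = {Poly_Mapping.single (Poly_Mapping.single (a \<union> b) 1) 1
     - Poly_Mapping.single (Poly_Mapping.single a 1 + Poly_Mapping.single b 1) 1 | a b.
     a \<in> E_all n \<and> b \<in> E_all n \<and> a \<inter> b = {}}"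

lemma E_all_finite: "e \<in> E_all n \<Longrightarrow> finite e"
  unfolding E_all_def using finite_subset by blast

lemma E_all_union: "a \<in> E_all n \<Longrightarrow> b \<in> E_all n \<Longrightarrow> a \<union> b \<in> E_all n"
proof -
  assume a: "a \<in> E_all n" and b: "b \<in> E_all n"
  have "finite (a \<union> b)" using a b E_all_finite by blast
  hence "card a \<le> card (a \<union> b)" by (rule card_mono) auto
  thus ?thesis using a b unfolding E_all_def by auto
qed

lemma Qset_toric: "q \<in> Qset n \<Longrightarrow> q \<in> toric_ideal (E_all n)"
proof -
  assume "q \<in> Qset n"
  then obtain a b where q: "q = Poly_Mapping.single (Poly_Mapping.single (a \<union> b) 1) 1
     - Poly_Mapping.single (Poly_Mapping.single a 1 + Poly_Mapping.single b 1) 1"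
    and ab: "a \<in> E_all n" "b \<in> E_all n" "a \<inter> b = {}" unfolding Qset_def by blast
  have "q \<in> poly_ring (E_all n)"
    unfolding q using ab E_all_union[OF ab(1,2)] keys_add[of "Poly_Mapping.single a (1::nat)" "Poly_Mapping.single b 1"]
    by (intro PR_diff PR_single) auto
  moreover have "toric_hom q = 0"
    unfolding q using ab
    by (simp add: toric_diff toric_single TM_single TM_add XE_union E_all_finite Const_def)
  ultimately show ?thesis unfolding toric_ideal_def by blast
qed

lemma keys_diff_sub: "Poly_Mapping.keys (x - y) \<subseteq> Poly_Mapping.keys x \<union> Poly_Mapping.keys y"
  by (auto simp: in_keys_iff lookup_minus)

lemma Qset_deg: "q \<in> (Qset n :: (nat set, 'k::comm_ring_1) mpoly set) \<Longrightarrow> total_deg q \<le> 2"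
proof -
  assume "q \<in> Qset n"
  then obtain a b where q: "q = Poly_Mapping.single (Poly_Mapping.single (a \<union> b) 1) 1
     - Poly_Mapping.single (Poly_Mapping.single a 1 + Poly_Mapping.single b 1) 1"
    unfolding Qset_def by blast
  show ?thesis unfolding q
  proof (rule total_deg_le)
    fix m :: "nat set \<Rightarrow>\<^sub>0 nat" assume "m \<in> Poly_Mapping.keys (Poly_Mapping.single (Poly_Mapping.single (a \<union> b) 1) (1::'k)
     - Poly_Mapping.single (Poly_Mapping.single a 1 + Poly_Mapping.single b 1) 1)"
    hence "m = Poly_Mapping.single (a \<union> b) 1 \<or> m = Poly_Mapping.single a 1 + Poly_Mapping.single b 1"
      using keys_diff_sub by fastforce
    thus "mdeg m \<le> 2" by (auto simp: mdeg_add mdeg_single)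
  qed
qed

lemma E_all_not_23: "e \<in> E_all n \<Longrightarrow> e \<notin> E_23 n \<Longrightarrow> 4 \<le> card e"
  unfolding E_all_def E_23_def by auto

lemma reduce:
  assumes QH: "Qset n \<subseteq> H"
  shows "Poly_Mapping.keys m \<subseteq> E_all n \<Longrightarrow> \<exists>m'. Poly_Mapping.keys m' \<subseteq> E_23 n \<and> TM m' = (TM m :: (nat,'k::comm_ring_1) mpoly)
     \<and> Poly_Mapping.single m (1::'k) - Poly_Mapping.single m' 1 \<in> ideal_in (poly_ring (E_all n)) H"
proof (induction "mu m" arbitrary: m rule: less_induct)
  case less
  show ?case
  proof (cases "Poly_Mapping.keys m \<subseteq> E_23 n")
    case True
    then show ?thesis using ID_zero by fastforce
  next
    case False
    then obtain e where e: "e \<in> Poly_Mapping.keys m" "e \<notin> E_23 n" by blast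
    with less.prems have eE: "e \<in> E_all n" by blast
    hence fe: "finite e" by (rule E_all_finite)
    have ce: "4 \<le> card e" using E_all_not_23 eE e(2) .
    obtain a where a: "a \<subseteq> e" "card a = 2" using obtain_subset_with_card_n[of 2 e] ce by auto
    define b where "b = e - a"
    have cb: "card b = card e - 2" unfolding b_def using a fe by (simp add: card_Diff_subset finite_subset)
    have aE: "a \<in> E_all n" using a eE unfolding E_all_def by auto
    have bE: "b \<in> E_all n" using cb ce eE unfolding E_all_def b_def by auto
    have eab: "e = a \<union> b" "a \<inter> b = {}" using a unfolding b_def by auto
    define m1 where "m1 = m - Poly_Mapping.single e 1"
    have m: "m = m1 + Poly_Mapping.single e 1"
    proof (rule poly_mapping_eqI)
      fix k show "Poly_Mapping.lookup m k = Poly_Mapping.lookup (m1 + Poly_Mapping.single e 1) k"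
        using e(1) by (auto simp: m1_def lookup_add lookup_minus lookup_single when_def in_keys_iff)
    qed
    have km1: "Poly_Mapping.keys m1 \<subseteq> Poly_Mapping.keys m"
      by (auto simp: m1_def in_keys_iff lookup_minus)
    define m2 where "m2 = m1 + (Poly_Mapping.single a 1 + Poly_Mapping.single b 1)"
    have km2: "Poly_Mapping.keys m2 \<subseteq> E_all n"
      using km1 less.prems aE bE keys_add[of m1 "Poly_Mapping.single a 1 + Poly_Mapping.single b 1"]
        keys_add[of "Poly_Mapping.single a (1::nat)" "Poly_Mapping.single b 1"]
      unfolding m2_def by auto
    define k where "k = card e - 2"
    have k: "card e = k + 2" "2 \<le> k" using ce unfolding k_def by auto
    have "mu m2 < mu m"
    proof -
      have "mu m = mu m1 + card e ^ 2" by (subst m) (simp add: mu_add mu_single)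
      moreover have "mu m2 = mu m1 + card a ^ 2 + card b ^ 2" unfolding m2_def by (simp add: mu_add mu_single)
      ultimately show ?thesis using a(2) cb k by (simp add: power2_eq_square algebra_simps)
    qed
    from less.hyps[OF this km2] obtain m' where m':
      "Poly_Mapping.keys m' \<subseteq> E_23 n" "TM m' = (TM m2 :: (nat,'k) mpoly)"
      "Poly_Mapping.single m2 (1::'k) - Poly_Mapping.single m' 1 \<in> ideal_in (poly_ring (E_all n)) H" by blast
    have TMeq: "TM m2 = (TM m :: (nat,'k) mpoly)"
    proof -
      have "TM m = (TM m1 :: (nat,'k) mpoly) * XE e" by (subst m) (simp add: TM_add TM_single)
      moreover have "XE e = (XE a :: (nat,'k) mpoly) * XE b" using eab XE_union E_all_finite aE bE by metis
      ultimately show ?thesis unfolding m2_def by (simp add: TM_add TM_single mult_ac)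
    qed
    have qin: "Poly_Mapping.single (Poly_Mapping.single (a \<union> b) 1) (1::'k)
     - Poly_Mapping.single (Poly_Mapping.single a 1 + Poly_Mapping.single b 1) 1 \<in> ideal_in (poly_ring (E_all n)) H"
      using QH ID_gen aE bE eab(2) unfolding Qset_def by blast
    have "Poly_Mapping.single m1 (1::'k) * (Poly_Mapping.single (Poly_Mapping.single (a \<union> b) 1) (1::'k)
     - Poly_Mapping.single (Poly_Mapping.single a 1 + Poly_Mapping.single b 1) 1) \<in> ideal_in (poly_ring (E_all n)) H"
      by (rule ID_mult[OF PR_single qin]) (use km1 less.prems in auto)
    hence h1: "Poly_Mapping.single m (1::'k) - Poly_Mapping.single m2 1 \<in> ideal_in (poly_ring (E_all n)) H"
      by (simp add: right_diff_distrib mult_single m2_def m flip: eab(1))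
    have "(Poly_Mapping.single m (1::'k) - Poly_Mapping.single m2 1) + (Poly_Mapping.single m2 (1::'k) - Poly_Mapping.single m' 1) \<in> ideal_in (poly_ring (E_all n)) H"
      by (rule ID_add[OF h1 m'(3)])
    thus ?thesis using m'(1,2) TMeq by (intro exI[of _ m']) auto
  qed
qed




lemma mdeg_le1: assumes "mdeg m \<le> 1" shows "m = 0 \<or> (\<exists>e. m = Poly_Mapping.single e (1::nat))"
proof (cases "Poly_Mapping.keys m = {}")
  case True thus ?thesis by simp
next
  case False
  then obtain e where e: "e \<in> Poly_Mapping.keys m" by blast
  have s: "mdeg m = Poly_Mapping.lookup m e + (\<Sum>k\<in>Poly_Mapping.keys m - {e}. Poly_Mapping.lookup m k)"
    unfolding mdeg_def using e by (simp add: sum.remove)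
  have pos: "Poly_Mapping.lookup m e \<ge> 1" using e by (simp add: in_keys_iff)
  hence "(\<Sum>k\<in>Poly_Mapping.keys m - {e}. Poly_Mapping.lookup m k) = 0" using s assms by linarith
  hence z: "\<forall>k\<in>Poly_Mapping.keys m - {e}. Poly_Mapping.lookup m k = 0" by simp
  have one: "Poly_Mapping.lookup m e = 1" using s assms pos by linarith
  have "m = Poly_Mapping.single e 1"
  proof (rule poly_mapping_eqI)
    fix k show "Poly_Mapping.lookup m k = Poly_Mapping.lookup (Poly_Mapping.single e 1) k"
      using z one by (cases "k = e") (auto simp: lookup_single in_keys_iff)
  qed
  thus ?thesis by blast
qed

lemma prod_single: "finite A \<Longrightarrow> (\<Prod>i\<in>A. Poly_Mapping.single (f i) (1::'k::comm_ring_1)) = Poly_Mapping.single (\<Sum>i\<in>A. f i) 1"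
  by (induction A rule: finite_induct) (auto simp: mult_single)

definition chi :: "nat set \<Rightarrow> (nat \<Rightarrow>\<^sub>0 nat)" where
  "chi e = (\<Sum>j\<in>e. Poly_Mapping.single j 1)"

lemma XE_single: "finite e \<Longrightarrow> XE e = (Poly_Mapping.single (chi e) 1 :: (nat,'k::comm_ring_1) mpoly)"
  unfolding XE_def chi_def Var_def by (rule prod_single)

lemma lookup_chi: "finite e \<Longrightarrow> Poly_Mapping.lookup (chi e) j = (if j \<in> e then 1 else 0)"
  unfolding chi_def by (simp add: lookup_sum lookup_single when_def)

lemma chi_inj: "finite e \<Longrightarrow> finite e' \<Longrightarrow> chi e = chi e' \<Longrightarrow> e = e'"
  by (metis lookup_chi one_neq_zero subsetI subset_antisym)

lemma chi_nz: "finite e \<Longrightarrow> e \<noteq> {} \<Longrightarrow> chi e \<noteq> 0"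
  by (metis all_not_in_conv lookup_chi lookup_zero one_neq_zero)

definition wt :: "(nat set \<Rightarrow>\<^sub>0 nat) \<Rightarrow> (nat \<Rightarrow>\<^sub>0 nat)" where
  "wt m = (\<Sum>e\<in>Poly_Mapping.keys m. chi e)"

lemma E23_fin: "e \<in> E_23 n \<Longrightarrow> finite e \<and> e \<noteq> {}"
  unfolding E_23_def using finite_subset by fastforce

lemma lin_zero:
  assumes g: "(g :: (nat set,'k::comm_ring_1) mpoly) \<in> toric_ideal (E_23 n)" and dg: "total_deg g \<le> 1"
  shows "g = 0"
proof (rule ccontr)
  assume "g \<noteq> 0"
  then obtain m0 where m0: "m0 \<in> Poly_Mapping.keys g" using keys_eq_empty by blast
  have gR: "g \<in> poly_ring (E_23 n)" and gz: "toric_hom g = 0" using g unfolding toric_ideal_def by auto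
  have form: "m = 0 \<or> (\<exists>e. e \<in> E_23 n \<and> m = Poly_Mapping.single e 1)" if "m \<in> Poly_Mapping.keys g" for m
  proof -
    have "m = 0 \<or> (\<exists>e. m = Poly_Mapping.single e (1::nat))" using mdeg_le1 total_deg_ge[OF dg that] by blast
    moreover have "Poly_Mapping.keys m \<subseteq> E_23 n" using gR that unfolding poly_ring_def by blast
    ultimately show ?thesis by auto
  qed
  have TMw: "TM m = (Poly_Mapping.single (wt m) 1 :: (nat,'k) mpoly)" if "m \<in> Poly_Mapping.keys g" for m
    using form[OF that] by (auto simp: TM_zero wt_def TM_single XE_single E23_fin)
  have winj: "wt m = wt m0 \<longleftrightarrow> m = m0" if "m \<in> Poly_Mapping.keys g" for m
  proof
    assume w: "wt m = wt m0"
    show "m = m0"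
      using form[OF that] form[OF m0] w
      by (auto simp: wt_def) (metis E23_fin chi_nz, metis E23_fin chi_nz, metis E23_fin chi_inj)
  qed simp
  have "Poly_Mapping.lookup (toric_hom g) (wt m0) = (\<Sum>m\<in>Poly_Mapping.keys g. Poly_Mapping.lookup (Poly_Mapping.single (wt m) (Poly_Mapping.lookup g m)) (wt m0))"
    unfolding toric_hom_TM lookup_sum by (intro sum.cong refl) (simp add: TMw Const_single)
  also have "\<dots> = (\<Sum>m\<in>Poly_Mapping.keys g. if m = m0 then Poly_Mapping.lookup g m else 0)"
    by (intro sum.cong refl) (auto simp: lookup_single when_def winj)
  also have "\<dots> = Poly_Mapping.lookup g m0" using m0 by simp
  finally show False using gz m0 by (simp add: in_keys_iff)
qed




lemma witness:
  assumes n: "4 \<le> n"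
  shows "\<exists>f::(nat set,'k::comm_ring_1) mpoly. f \<in> toric_ideal (E_23 n) \<and> f \<noteq> 0"
proof -
  define mA where "mA = Poly_Mapping.single {1,2::nat} (1::nat) + Poly_Mapping.single {3,4} 1"
  define mB where "mB = Poly_Mapping.single {1,3::nat} (1::nat) + Poly_Mapping.single {2,4} 1"
  define f where "f = Poly_Mapping.single mA (1::'k) - Poly_Mapping.single mB 1"
  have E: "{1,2} \<in> E_23 n" "{3,4} \<in> E_23 n" "{1,3} \<in> E_23 n" "{2,4} \<in> E_23 n"
    using n unfolding E_23_def by auto
  have kA: "Poly_Mapping.keys mA \<subseteq> E_23 n" unfolding mA_def
    using keys_add[of "Poly_Mapping.single {1,2::nat} (1::nat)" "Poly_Mapping.single {3,4} 1"] E by auto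
  have kB: "Poly_Mapping.keys mB \<subseteq> E_23 n" unfolding mB_def
    using keys_add[of "Poly_Mapping.single {1,3::nat} (1::nat)" "Poly_Mapping.single {2,4} 1"] E by auto
  have "f \<in> poly_ring (E_23 n)" unfolding f_def using kA kB by (intro PR_diff PR_single)
  moreover have "toric_hom f = 0"
  proof -
    have "XE {1,2} * XE {3,4} = (XE ({1,2} \<union> {3,4}) :: (nat,'k) mpoly)" by (rule XE_union[symmetric]) auto
    also have "{1,2} \<union> {3,4} = {1,3} \<union> {2,4::nat}" by auto
    also have "XE \<dots> = (XE {1,3} * XE {2,4} :: (nat,'k) mpoly)" by (rule XE_union) auto
    finally show ?thesis unfolding f_def mA_def mB_def
      by (simp add: toric_diff toric_single TM_add TM_single Const_def)
  qed
  moreover have "f \<noteq> 0"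
  proof
    assume "f = 0"
    hence "Poly_Mapping.lookup f mA = 0" by simp
    moreover have "mA \<noteq> mB"
    proof
      assume "mA = mB"
      hence "Poly_Mapping.lookup mA {1,2} = Poly_Mapping.lookup mB {1,2}" by simp
      moreover have "{1,2::nat} \<noteq> {3,4}" "{1,2::nat} \<noteq> {1,3}" "{1,2::nat} \<noteq> {2,4}" by auto
      ultimately show False unfolding mA_def mB_def by (simp add: lookup_add lookup_single when_def)
    qed
    ultimately show False unfolding f_def by (simp add: lookup_minus lookup_single when_def)
  qed
  ultimately show ?thesis unfolding toric_ideal_def by blast
qed

theorem lemma5p5:
  fixes n d :: nat
  assumes "generated_in_degree_le (poly_ring (E_23 n)) (toric_ideal (E_23 n) :: (nat set, 'k::field) mpoly set) d"
  shows "generated_in_degree_le (poly_ring (E_all n)) (toric_ideal (E_all n) :: (nat set, 'k) mpoly set) d"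
proof (cases "n \<le> 3")
  case True
  have "E_all n = E_23 n"
  proof -
    have "card e \<le> 3" if "e \<subseteq> {1..n}" for e
      using card_mono[OF finite_atLeastAtMost that] True by simp
    thus ?thesis unfolding E_all_def E_23_def by auto
  qed
  thus ?thesis using assms by simp
next
  case False
  hence n4: "4 \<le> n" by simp
  obtain G where G: "G \<subseteq> (toric_ideal (E_23 n) :: (nat set, 'k) mpoly set)" "\<forall>g\<in>G. total_deg g \<le> d"
      "ideal_in (poly_ring (E_23 n)) G = toric_ideal (E_23 n)"
    using assms unfolding generated_in_degree_le_def by blast
  let ?R = "poly_ring (E_all n) :: (nat set, 'k) mpoly set"
  let ?R3 = "poly_ring (E_23 n) :: (nat set, 'k) mpoly set"
  have E23sub: "E_23 n \<subseteq> E_all n" unfolding E_23_def E_all_def by auto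
  hence R3R: "?R3 \<subseteq> ?R" by (rule PR_mono)
  have d2: "2 \<le> d"
  proof (rule ccontr)
    assume "\<not> 2 \<le> d"
    hence "\<forall>g\<in>G. g = 0" using G(1,2) lin_zero by fastforce
    hence "ideal_in ?R3 G \<subseteq> {0}"
      by (intro ID_least) (auto simp: PR_zero)
    moreover obtain f :: "(nat set, 'k) mpoly" where "f \<in> toric_ideal (E_23 n)" "f \<noteq> 0"
      using witness[OF n4] by blast
    ultimately show False using G(3) by blast
  qed
  define H where "H = G \<union> Qset n"
  have Htor: "H \<subseteq> toric_ideal (E_all n)"
    unfolding H_def using G(1) R3R Qset_toric unfolding toric_ideal_def by blast
  have Hdeg: "\<forall>g\<in>H. total_deg g \<le> d"
    unfolding H_def using G(2) Qset_deg d2 by fastforce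
  have sub1: "ideal_in ?R H \<subseteq> toric_ideal (E_all n)"
    by (rule ID_least[OF Htor]) (auto simp: toric_ideal_def PR_zero toric_zero PR_add toric_add PR_mult toric_mult)
  have sub2: "toric_ideal (E_all n) \<subseteq> ideal_in ?R H"
  proof
    fix p :: "(nat set, 'k) mpoly" assume p: "p \<in> toric_ideal (E_all n)"
    hence pR: "p \<in> ?R" and pz: "toric_hom p = 0" unfolding toric_ideal_def by auto
    have "\<forall>m\<in>Poly_Mapping.keys p. \<exists>m'. Poly_Mapping.keys m' \<subseteq> E_23 n \<and> TM m' = (TM m :: (nat,'k) mpoly)
     \<and> Poly_Mapping.single m (1::'k) - Poly_Mapping.single m' 1 \<in> ideal_in ?R H"
      using reduce[of n H] pR unfolding H_def poly_ring_def by blast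
    then obtain phi where phi: "\<And>m. m \<in> Poly_Mapping.keys p \<Longrightarrow> Poly_Mapping.keys (phi m) \<subseteq> E_23 n \<and> TM (phi m) = (TM m :: (nat,'k) mpoly)
     \<and> Poly_Mapping.single m (1::'k) - Poly_Mapping.single (phi m) 1 \<in> ideal_in ?R H"
      by metis
    define p' where "p' = (\<Sum>m\<in>Poly_Mapping.keys p. Poly_Mapping.single (phi m) (Poly_Mapping.lookup p m))"
    have "p - p' = (\<Sum>m\<in>Poly_Mapping.keys p. Const (Poly_Mapping.lookup p m) * (Poly_Mapping.single m 1 - Poly_Mapping.single (phi m) 1))"
      unfolding p'_def by (subst (1) expand) (simp add: sum_subtractf right_diff_distrib Const_single)
    also have "\<dots> \<in> ideal_in ?R H"
      by (intro ID_sum ID_mult[OF PR_Const]) (use phi in blast)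
    finally have d1: "p - p' \<in> ideal_in ?R H" .
    have "p' \<in> ?R3" unfolding p'_def by (intro PR_sum PR_single) (use phi in blast)
    moreover have "toric_hom p' = 0"
    proof -
      have "toric_hom p' = (\<Sum>m\<in>Poly_Mapping.keys p. Const (Poly_Mapping.lookup p m) * TM m)"
        unfolding p'_def toric_sum toric_single by (intro sum.cong refl) (simp add: phi)
      thus ?thesis using pz by (simp add: toric_hom_TM)
    qed
    ultimately have "p' \<in> toric_ideal (E_23 n)" unfolding toric_ideal_def by blast
    hence "p' \<in> ideal_in ?R3 G" using G(3) by simp
    moreover have "ideal_in ?R3 G \<subseteq> ideal_in ?R H"
      by (rule ID_sub[OF R3R]) (use G(1) in \<open>auto simp: H_def toric_ideal_def PR_add PR_mult PR_zero\<close>)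
    ultimately have "p' \<in> ideal_in ?R H" by blast
    from ID_add[OF d1 this] show "p \<in> ideal_in ?R H" by simp
  qed
  show ?thesis unfolding generated_in_degree_le_def
    using Htor Hdeg sub1 sub2 by blast
qed


end
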